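(* Let $N$ be a finitely generated torsion-free nilpotent group and let $\phi\in\mathrm{Aut}(N)$ be homologically trivial, i.e. $\phi$ induces the identity on $H_1(N,\mathbb{Z})$. Then $K_{\phi}=1$.
   Context: For a finitely generated group $G$ with finite generating set $S$, $\ell=\ell_S$ denotes word length with respect to $S$. For $\phi\in\mathrm{Aut}(G)$, the entropy of $\phi$ is $K_{\phi}=\max_{s\in S}\lim_{n\to\infty}\ell(\phi^n(s))^{1/n}$; it is independent of $S$. *)

theory Defs
  imports "HOL-Analysis.Analysis" "HOL-Algebra.Algebra"
begin

fun lower_central :: "('a, 'b) monoid_scheme \<Rightarrow> nat \<Rightarrow> 'a set" where
  "lower_central G 0 = carrier G"
| "lower_central G (Suc i) =
     generate G (\<Union>g \<in> carrier G. \<Union>h \<in> lower_central G i.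
        {g \<otimes>\<^bsub>G\<^esub> h \<otimes>\<^bsub>G\<^esub> inv\<^bsub>G\<^esub> g \<otimes>\<^bsub>G\<^esub> inv\<^bsub>G\<^esub> h})"

definition nilpotent_group :: "('a, 'b) monoid_scheme \<Rightarrow> bool" where
  "nilpotent_group G \<longleftrightarrow> group G \<and> (\<exists>c. lower_central G c = {\<one>\<^bsub>G\<^esub>})"

definition torsion_free :: "('a, 'b) monoid_scheme \<Rightarrow> bool" where
  "torsion_free G \<longleftrightarrow>
     (\<forall>x \<in> carrier G. \<forall>n::nat. n > 0 \<longrightarrow> x [^]\<^bsub>G\<^esub> n = \<one>\<^bsub>G\<^esub> \<longrightarrow> x = \<one>\<^bsub>G\<^esub>)"

definition finite_generating_set :: "('a, 'b) monoid_scheme \<Rightarrow> 'a set \<Rightarrow> bool" where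
  "finite_generating_set G S \<longleftrightarrow> finite S \<and> S \<subseteq> carrier G \<and> generate G S = carrier G"

definition finitely_generated :: "('a, 'b) monoid_scheme \<Rightarrow> bool" where
  "finitely_generated G \<longleftrightarrow> (\<exists>S. finite_generating_set G S)"

definition word_length :: "('a, 'b) monoid_scheme \<Rightarrow> 'a set \<Rightarrow> 'a \<Rightarrow> nat" where
  "word_length G S g = (LEAST n. \<exists>ws. length ws = n \<and> set ws \<subseteq> S \<union> m_inv G ` S
                                     \<and> foldr (\<otimes>\<^bsub>G\<^esub>) ws \<one>\<^bsub>G\<^esub> = g)"

text \<open>phi induces the identity on H_1(N,Z) = N/[N,N].\<close>
definition homologically_trivial :: "('a, 'b) monoid_scheme \<Rightarrow> ('a \<Rightarrow> 'a) \<Rightarrow> bool" where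
  "homologically_trivial G \<phi> \<longleftrightarrow>
     (\<forall>x \<in> carrier G. \<phi> x \<otimes>\<^bsub>G\<^esub> inv\<^bsub>G\<^esub> x \<in> derived G (carrier G))"

definition entropy_seq :: "('a, 'b) monoid_scheme \<Rightarrow> 'a set \<Rightarrow> ('a \<Rightarrow> 'a) \<Rightarrow> 'a \<Rightarrow> nat \<Rightarrow> real" where
  "entropy_seq G S \<phi> s n = root n (real (word_length G S ((\<phi> ^^ n) s)))"

definition entropy :: "('a, 'b) monoid_scheme \<Rightarrow> 'a set \<Rightarrow> ('a \<Rightarrow> 'a) \<Rightarrow> real" where
  "entropy G S \<phi> = Max ((\<lambda>s. lim (entropy_seq G S \<phi> s)) ` S)"

end

theory Submission
  imports Defs
begin

definition cm :: "('a, 'b) monoid_scheme \<Rightarrow> 'a \<Rightarrow> 'a \<Rightarrow> 'a" where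
  "cm G x y = x \<otimes>\<^bsub>G\<^esub> y \<otimes>\<^bsub>G\<^esub> inv\<^bsub>G\<^esub> x \<otimes>\<^bsub>G\<^esub> inv\<^bsub>G\<^esub> y"

context group begin

lemma canc1 [simp]: "x \<in> carrier G \<Longrightarrow> y \<in> carrier G \<Longrightarrow> x \<otimes> (inv x \<otimes> y) = y"
  by (simp flip: m_assoc)
lemma canc2 [simp]: "x \<in> carrier G \<Longrightarrow> y \<in> carrier G \<Longrightarrow> inv x \<otimes> (x \<otimes> y) = y"
  by (simp flip: m_assoc)

lemmas gsimps = m_assoc inv_mult_group cm_def

lemma cm_closed [simp]: "x \<in> carrier G \<Longrightarrow> y \<in> carrier G \<Longrightarrow> cm G x y \<in> carrier G"
  by (simp add: cm_def)

lemma lc_eq: "lower_central G (Suc i) = generate G (\<Union>g \<in> carrier G. \<Union>h \<in> lower_central G i. {cm G g h})"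
  by (simp add: cm_def)

lemma lc_carrier: "lower_central G i \<subseteq> carrier G"
proof (induction i)
  case 0 then show ?case by simp
next
  case (Suc i)
  have "(\<Union>g \<in> carrier G. \<Union>h \<in> lower_central G i. {cm G g h}) \<subseteq> carrier G"
    using Suc by (auto intro!: cm_closed)
  then show ?case unfolding lc_eq by (rule generate_incl)
qed

lemma lc_subgroup: "subgroup (lower_central G i) G"
proof (cases i)
  case 0 then show ?thesis by (simp add: subgroup_self)
next
  case (Suc j)
  have "(\<Union>g \<in> carrier G. \<Union>h \<in> lower_central G j. {cm G g h}) \<subseteq> carrier G"
    using lc_carrier by (auto intro!: cm_closed)
  then show ?thesis unfolding Suc lc_eq by (rule generate_is_subgroup)
qed

lemma lc_in [simp]: "x \<in> lower_central G i \<Longrightarrow> x \<in> carrier G"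
  using lc_carrier by auto

lemma lc_one [simp]: "\<one> \<in> lower_central G i"
  using subgroup.one_closed[OF lc_subgroup] .
lemma lc_mult [simp]: "x \<in> lower_central G i \<Longrightarrow> y \<in> lower_central G i \<Longrightarrow> x \<otimes> y \<in> lower_central G i"
  using subgroup.m_closed[OF lc_subgroup] .
lemma lc_inv [simp]: "x \<in> lower_central G i \<Longrightarrow> inv x \<in> lower_central G i"
  using subgroup.m_inv_closed[OF lc_subgroup] .

lemma lc_gen: "g \<in> carrier G \<Longrightarrow> h \<in> lower_central G i \<Longrightarrow> cm G g h \<in> lower_central G (Suc i)"
  unfolding lc_eq by (rule generate.incl) auto

lemma lc_normal: "x \<in> carrier G \<Longrightarrow> y \<in> lower_central G i \<Longrightarrow> x \<otimes> y \<otimes> inv x \<in> lower_central G i"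
proof (induction i arbitrary: x y)
  case 0 then show ?case by simp
next
  case (Suc i)
  from Suc.prems(2) have "y \<in> generate G (\<Union>g \<in> carrier G. \<Union>h \<in> lower_central G i. {cm G g h})"
    by (simp only: lc_eq)
  then show ?case using Suc.prems(1)
  proof (induction y arbitrary: x rule: generate.induct)
    case one then show ?case by (simp add: generate.one)
  next
    case (incl h)
    then obtain g k where gk: "g \<in> carrier G" "k \<in> lower_central G i" "h = cm G g k" by auto
    have "x \<otimes> h \<otimes> inv x = cm G (x \<otimes> g \<otimes> inv x) (x \<otimes> k \<otimes> inv x)"
      using gk incl by (simp add: gsimps)
    then show ?case using lc_gen[of "x \<otimes> g \<otimes> inv x" "x \<otimes> k \<otimes> inv x" i] Suc.IH gk incl by simp
  next
    case (inv h)
    then obtain g k where gk: "g \<in> carrier G" "k \<in> lower_central G i" "h = cm G g k" by auto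
    have "x \<otimes> inv h \<otimes> inv x = inv (cm G (x \<otimes> g \<otimes> inv x) (x \<otimes> k \<otimes> inv x))"
      using gk inv by (simp add: gsimps)
    then show ?case using lc_inv[OF lc_gen[of "x \<otimes> g \<otimes> inv x" "x \<otimes> k \<otimes> inv x" i]] Suc.IH gk inv by simp
  next
    case (eng h1 h2)
    have c: "h1 \<in> carrier G" "h2 \<in> carrier G" using eng.hyps lc_eq lc_carrier by blast+
    have "x \<otimes> (h1 \<otimes> h2) \<otimes> inv x = (x \<otimes> h1 \<otimes> inv x) \<otimes> (x \<otimes> h2 \<otimes> inv x)"
      using c eng by (simp add: gsimps)
    then show ?case using eng lc_mult[of "x \<otimes> h1 \<otimes> inv x" "Suc i"] by simp
  qed
qed

lemma lc_Suc_sub: "lower_central G (Suc i) \<subseteq> lower_central G i"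
  unfolding lc_eq
proof (rule generate_subgroup_incl[OF _ lc_subgroup], safe)
  fix g h assume a: "g \<in> carrier G" "h \<in> lower_central G i"
  have "cm G g h = (g \<otimes> h \<otimes> inv g) \<otimes> inv h" using a by (simp add: cm_def)
  then show "cm G g h \<in> lower_central G i" using lc_normal a by simp
qed

lemma lc_antimono: "i \<le> j \<Longrightarrow> lower_central G j \<subseteq> lower_central G i"
proof (induction j rule: dec_induct)
  case base then show ?case by simp
next
  case (step n) then show ?case using lc_Suc_sub[of n] by blast
qed

lemma cm_inv: "x \<in> carrier G \<Longrightarrow> y \<in> carrier G \<Longrightarrow> inv (cm G x y) = cm G y x"
  by (simp add: gsimps)

lemma cm_gen_closed:
  assumes N: "subgroup N G" "\<And>x y. x\<in>carrier G \<Longrightarrow> y\<in>N \<Longrightarrow> x\<otimes>y\<otimes>inv x \<in> N"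
    and H: "H \<subseteq> carrier G" and y: "y \<in> carrier G"
    and hyp: "\<And>h. h\<in>H \<Longrightarrow> cm G h y \<in> N"
    and x: "x \<in> generate G H"
  shows "cm G x y \<in> N"
  using x
proof (induction x rule: generate.induct)
  case one then show ?case using y subgroup.one_closed[OF N(1)] by (simp add: cm_def)
next
  case (incl h) then show ?case using hyp by simp
next
  case (inv h)
  have "cm G (inv h) y = inv h \<otimes> inv (cm G h y) \<otimes> inv (inv h)" using inv H y by (auto simp: gsimps)
  moreover have "inv (cm G h y) \<in> N" using hyp inv subgroup.m_inv_closed[OF N(1)] by auto
  ultimately show ?case using N(2)[of "inv h" "inv (cm G h y)"] inv H by auto
next
  case (eng h1 h2)
  have c: "h1 \<in> carrier G" "h2 \<in> carrier G" using eng.hyps generate_in_carrier H by blast+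
  have "cm G (h1 \<otimes> h2) y = (h1 \<otimes> cm G h2 y \<otimes> inv h1) \<otimes> cm G h1 y" using c y by (simp add: gsimps)
  then show ?case using N eng c subgroup.m_closed[OF N(1)] by auto
qed

lemma hall_witt:
  assumes "g \<in> carrier G" "h \<in> carrier G" "w \<in> carrier G"
  shows "cm G (cm G g h) w = g \<otimes> inv ((w \<otimes> cm G (cm G (inv w) (inv g)) h \<otimes> inv w) \<otimes>
          (h \<otimes> cm G (cm G (inv h) w) (inv g) \<otimes> inv h)) \<otimes> inv g"
  using assms by (simp add: gsimps)

lemma three_subgroup:
  "x \<in> lower_central G i \<Longrightarrow> y \<in> lower_central G j \<Longrightarrow> cm G x y \<in> lower_central G (i + j + 1)"
proof (induction i arbitrary: j x y)
  case 0 then show ?case using lc_gen by simp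
next
  case (Suc i)
  let ?N = "lower_central G (Suc i + j + 1)"
  have x: "x \<in> generate G (\<Union>g \<in> carrier G. \<Union>h \<in> lower_central G i. {cm G g h})"
    using Suc.prems(1) by (simp only: lc_eq)
  show ?case
  proof (rule cm_gen_closed[OF lc_subgroup lc_normal _ _ _ x])
    show "(\<Union>g \<in> carrier G. \<Union>h \<in> lower_central G i. {cm G g h}) \<subseteq> carrier G" by auto
    show "y \<in> carrier G" using Suc.prems by simp
  next
    fix e assume "e \<in> (\<Union>g \<in> carrier G. \<Union>h \<in> lower_central G i. {cm G g h})"
    then obtain g h where gh: "g \<in> carrier G" "h \<in> lower_central G i" "e = cm G g h" by auto
    have w: "y \<in> lower_central G j" "y \<in> carrier G" using Suc.prems by auto
    have u: "cm G (inv y) (inv g) \<in> lower_central G (j + 1)"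
      using lc_inv[OF lc_gen[where g="inv g" and h="inv y" and i=j]] gh w cm_inv by simp
    have t1a: "cm G (cm G (inv y) (inv g)) h \<in> ?N"
      using lc_inv[OF Suc.IH[OF gh(2) u]] cm_inv[of h "cm G (inv y) (inv g)"] gh w
      by (simp add: add.commute add.left_commute)
    have t1: "y \<otimes> cm G (cm G (inv y) (inv g)) h \<otimes> inv y \<in> ?N"
      using lc_normal[OF _ t1a] w by simp
    have v: "cm G (inv h) y \<in> lower_central G (i + j + 1)"
      using Suc.IH[where x="inv h" and j=j and y=y] gh w by simp
    have t2a: "cm G (cm G (inv h) y) (inv g) \<in> ?N"
      using lc_inv[OF lc_gen[OF _ v, of "inv g"]] gh w cm_inv by simp
    have t2: "h \<otimes> cm G (cm G (inv h) y) (inv g) \<otimes> inv h \<in> ?N"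
      using lc_normal[OF _ t2a] gh by simp
    show "cm G e y \<in> ?N"
      unfolding gh(3) hall_witt[OF gh(1) lc_in[OF gh(2)] w(2)]
      using lc_normal[OF _ lc_inv[OF lc_mult[OF t1 t2]], of g] gh by simp
  qed
qed

end

lemma tele:
  fixes f :: "nat \<Rightarrow> nat"
  assumes "\<And>n. f (Suc n) \<le> f n + A * (n+1)^m"
  shows "f n \<le> (f 0 + A) * (n+1)^(Suc m)"
proof -
  have a: "f n \<le> f 0 + n * A * (n+1)^m" for n
  proof (induction n)
    case 0 then show ?case by simp
  next
    case (Suc n)
    have "(n+1)^m \<le> (Suc n + 1)^m" by (rule power_mono) auto
    then have "n * A * (n+1)^m + A * (n+1)^m \<le> n * A * (Suc n + 1)^m + A * (Suc n + 1)^m"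
      by (intro add_mono mult_le_mono2)
    also have "\<dots> = Suc n * A * (Suc n + 1)^m" by (simp add: algebra_simps)
    finally have "n * A * (n+1)^m + A * (n+1)^m \<le> Suc n * A * (Suc n + 1)^m" .
    then show ?case using Suc assms[of n] by linarith
  qed
  have "1 \<le> (n+1)^(Suc m)" using one_le_power[of "n+1" "Suc m"] by linarith
  then have b: "f 0 \<le> f 0 * (n+1)^(Suc m)" using mult_le_mono2[of 1 "(n+1)^(Suc m)" "f 0"] by simp
  have c: "n * A * (n+1)^m \<le> A * (n+1)^(Suc m)" by (simp add: algebra_simps)
  show ?thesis using a[of n] b c by (simp add: algebra_simps)
qed

declare lower_central.simps(2)[simp del]

context group begin

lemma derived_lc1: "derived G (carrier G) = lower_central G 1"
  by (simp add: derived_def lower_central.simps)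

lemma D_gen_closed:
  assumes f: "f \<in> hom G G"
    and N: "subgroup N G" "\<And>x y. x\<in>carrier G \<Longrightarrow> y\<in>N \<Longrightarrow> x\<otimes>y\<otimes>inv x \<in> N"
    and H: "H \<subseteq> carrier G"
    and hyp: "\<And>h. h\<in>H \<Longrightarrow> f h \<otimes> inv h \<in> N"
    and x: "x \<in> generate G H"
  shows "f x \<otimes> inv x \<in> N"
  using x
proof (induction x rule: generate.induct)
  case one then show ?case using hom_one[OF f is_group is_group] subgroup.one_closed[OF N(1)] by simp
next
  case (incl h) then show ?case using hyp by simp
next
  case (inv h)
  have gh: "group_hom G G f" using f by (simp add: group_hom_def group_hom_axioms_def is_group)
  have hc: "h \<in> carrier G" "f h \<in> carrier G" using inv H hom_in_carrier[OF f] by auto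
  have "f (inv h) \<otimes> inv (inv h) = inv h \<otimes> inv (f h \<otimes> inv h) \<otimes> inv (inv h)"
    using hc group_hom.hom_inv[OF gh hc(1)] by (simp add: gsimps)
  moreover have "inv (f h \<otimes> inv h) \<in> N" using hyp inv subgroup.m_inv_closed[OF N(1)] by auto
  ultimately show ?case using N(2)[of "inv h" "inv (f h \<otimes> inv h)"] hc by auto
next
  case (eng h1 h2)
  have c: "h1 \<in> carrier G" "h2 \<in> carrier G" using eng.hyps generate_in_carrier H by blast+
  have c2: "f h1 \<in> carrier G" "f h2 \<in> carrier G" using c hom_in_carrier[OF f] by auto
  have "f (h1 \<otimes> h2) \<otimes> inv (h1 \<otimes> h2) = (f h1 \<otimes> inv h1) \<otimes> (h1 \<otimes> (f h2 \<otimes> inv h2) \<otimes> inv h1)"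
    using c c2 hom_mult[OF f c] by (simp add: gsimps)
  then show ?case using N eng c c2 subgroup.m_closed[OF N(1)] by auto
qed

lemma D_lemma:
  assumes f: "f \<in> hom G G"
    and ht: "\<And>x. x \<in> carrier G \<Longrightarrow> f x \<otimes> inv x \<in> lower_central G 1"
  shows "x \<in> lower_central G j \<Longrightarrow> f x \<otimes> inv x \<in> lower_central G (Suc j)"
proof (induction j arbitrary: x)
  case 0 then show ?case using ht by simp
next
  case (Suc j)
  have x: "x \<in> generate G (\<Union>g \<in> carrier G. \<Union>h \<in> lower_central G j. {cm G g h})"
    using Suc.prems(1) by (simp only: lc_eq)
  show ?case
  proof (rule D_gen_closed[OF f lc_subgroup lc_normal _ _ x])
    show "(\<Union>g \<in> carrier G. \<Union>h \<in> lower_central G j. {cm G g h}) \<subseteq> carrier G" by auto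
  next
    fix e assume "e \<in> (\<Union>g \<in> carrier G. \<Union>h \<in> lower_central G j. {cm G g h})"
    then obtain g h where gh: "g \<in> carrier G" "h \<in> lower_central G j" "e = cm G g h" by auto
    have hc: "h \<in> carrier G" using gh by simp
    define a where "a = f g \<otimes> inv g"
    define b where "b = f h \<otimes> inv h"
    have fc: "f g \<in> carrier G" "f h \<in> carrier G" using gh hc hom_in_carrier[OF f] by auto
    have a1: "a \<in> lower_central G 1" unfolding a_def using ht gh by simp
    have b1: "b \<in> lower_central G (Suc j)" unfolding b_def using Suc.IH gh by simp
    have ac: "a \<in> carrier G" and bc: "b \<in> carrier G" using lc_in[OF a1] lc_in[OF b1] by auto
    have fg: "f g = a \<otimes> g" and fh: "f h = b \<otimes> h" using fc gh hc by (simp_all add: a_def b_def m_assoc)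
    have gh': "group_hom G G f" using f by (simp add: group_hom_def group_hom_axioms_def is_group)
    have fe: "f e = cm G (a \<otimes> g) (b \<otimes> h)"
      unfolding gh(3) cm_def using gh hc fc hom_mult[OF f] group_hom.hom_inv[OF gh']
      by (simp add: fg fh)
    have ec: "e \<in> carrier G" using gh hc by simp
    have e1: "e \<in> lower_central G (Suc j)" using lc_gen gh by simp
    have iden: "f e \<otimes> inv e = cm G (a \<otimes> g) b \<otimes> (b \<otimes> (cm G a e \<otimes> (e \<otimes> cm G a h \<otimes> inv e) \<otimes> cm G e (inv b)) \<otimes> inv b)"
      unfolding fe using ac bc gh hc ec unfolding gh(3) by (simp add: gsimps)
    let ?N = "lower_central G (Suc (Suc j))"
    have m1: "cm G (a \<otimes> g) b \<in> ?N" using lc_gen[OF _ b1] ac gh by simp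
    have m2: "cm G a e \<in> ?N" using lc_gen[OF _ e1] ac by simp
    have m3: "cm G a h \<in> ?N" using three_subgroup[OF a1 gh(2)] by simp
    have m4: "cm G e (inv b) \<in> ?N" using lc_gen[OF _ lc_inv[OF b1]] ec by simp
    have m3': "e \<otimes> cm G a h \<otimes> inv e \<in> ?N" using lc_normal[OF ec m3] .
    have "cm G a e \<otimes> (e \<otimes> cm G a h \<otimes> inv e) \<otimes> cm G e (inv b) \<in> ?N"
      using m2 m3' m4 by simp
    then have "b \<otimes> (cm G a e \<otimes> (e \<otimes> cm G a h \<otimes> inv e) \<otimes> cm G e (inv b)) \<otimes> inv b \<in> ?N"
      using lc_normal bc by simp
    then show "f e \<otimes> inv e \<in> ?N" unfolding iden using m1 by simp
  qed
qed

lemma foldr_mult: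
  "set ws \<subseteq> carrier G \<Longrightarrow> y \<in> carrier G \<Longrightarrow> foldr (\<otimes>) ws y = foldr (\<otimes>) ws \<one> \<otimes> y \<and> foldr (\<otimes>) ws \<one> \<in> carrier G"
  by (induction ws) (auto simp: m_assoc)

lemma word_exists:
  assumes S: "S \<subseteq> carrier G" and x: "x \<in> generate G S"
  shows "\<exists>ws. set ws \<subseteq> S \<union> m_inv G ` S \<and> foldr (\<otimes>) ws \<one> = x"
  using x
proof (induction x rule: generate.induct)
  case one then show ?case by (rule exI[of _ "[]"]) simp
next
  case (incl h) then show ?case by (intro exI[of _ "[h]"]) (use S in auto)
next
  case (inv h) then show ?case by (intro exI[of _ "[inv h]"]) (use S in auto)
next
  case (eng h1 h2)
  then obtain w1 w2 where w: "set w1 \<subseteq> S \<union> m_inv G ` S" "foldr (\<otimes>) w1 \<one> = h1"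
    "set w2 \<subseteq> S \<union> m_inv G ` S" "foldr (\<otimes>) w2 \<one> = h2" by blast
  have sc: "S \<union> m_inv G ` S \<subseteq> carrier G" using S by auto
  have "foldr (\<otimes>) (w1 @ w2) \<one> = h1 \<otimes> h2"
    using foldr_mult[of w1 "foldr (\<otimes>) w2 \<one>"] foldr_mult[of w2 \<one>] w sc by auto
  then show ?case using w by (intro exI[of _ "w1 @ w2"]) auto
qed

lemma wl_le:
  "set ws \<subseteq> S \<union> m_inv G ` S \<Longrightarrow> foldr (\<otimes>) ws \<one> = x \<Longrightarrow> word_length G S x \<le> length ws"
  unfolding word_length_def by (rule Least_le) auto

lemma wl_word:
  assumes S: "S \<subseteq> carrier G" "generate G S = carrier G" and x: "x \<in> carrier G"
  shows "\<exists>ws. length ws = word_length G S x \<and> set ws \<subseteq> S \<union> m_inv G ` S \<and> foldr (\<otimes>) ws \<one> = x"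
proof -
  obtain ws where "set ws \<subseteq> S \<union> m_inv G ` S \<and> foldr (\<otimes>) ws \<one> = x"
    using word_exists[OF S(1)] S(2) x by auto
  then have ex: "\<exists>n ws. length ws = n \<and> set ws \<subseteq> S \<union> m_inv G ` S \<and> foldr (\<otimes>) ws \<one> = x" by blast
  show ?thesis unfolding word_length_def by (rule LeastI_ex[OF ex])
qed

lemma wl_mult:
  assumes S: "S \<subseteq> carrier G" "generate G S = carrier G" and x: "x \<in> carrier G" "y \<in> carrier G"
  shows "word_length G S (x \<otimes> y) \<le> word_length G S x + word_length G S y"
proof -
  obtain w1 where w1: "length w1 = word_length G S x" "set w1 \<subseteq> S \<union> m_inv G ` S" "foldr (\<otimes>) w1 \<one> = x"
    using wl_word[OF S x(1)] by blast
  obtain w2 where w2: "length w2 = word_length G S y" "set w2 \<subseteq> S \<union> m_inv G ` S" "foldr (\<otimes>) w2 \<one> = y"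
    using wl_word[OF S x(2)] by blast
  have sc: "S \<union> m_inv G ` S \<subseteq> carrier G" using S by auto
  have "foldr (\<otimes>) (w1 @ w2) \<one> = x \<otimes> y"
    using foldr_mult[of w1 "foldr (\<otimes>) w2 \<one>"] foldr_mult[of w2 \<one>] w1 w2 sc by auto
  then have "word_length G S (x \<otimes> y) \<le> length (w1 @ w2)" using w1 w2 by (intro wl_le) auto
  then show ?thesis using w1 w2 by simp
qed

lemma wl_one: "word_length G S \<one> = 0"
  using wl_le[of "[]" S \<one>] by simp

lemma wl_pos:
  assumes S: "S \<subseteq> carrier G" "generate G S = carrier G" and x: "x \<in> carrier G" "x \<noteq> \<one>"
  shows "1 \<le> word_length G S x"
proof (rule ccontr)
  assume "\<not> 1 \<le> word_length G S x"
  then have "word_length G S x = 0" by simp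
  then obtain ws where "length ws = 0" "foldr (\<otimes>) ws \<one> = x" using wl_word[OF S x(1)] by metis
  then show False using x by simp
qed

end

context group begin

lemma it_closed: "f \<in> hom G G \<Longrightarrow> x \<in> carrier G \<Longrightarrow> (f ^^ n) x \<in> carrier G"
  by (induction n) (auto simp: hom_in_carrier)

lemma it_mult: "f \<in> hom G G \<Longrightarrow> x \<in> carrier G \<Longrightarrow> y \<in> carrier G \<Longrightarrow>
    (f ^^ n) (x \<otimes> y) = (f ^^ n) x \<otimes> (f ^^ n) y"
  by (induction n) (auto simp: hom_mult it_closed)

lemma it_one: "f \<in> hom G G \<Longrightarrow> (f ^^ n) \<one> = \<one>"
  by (induction n) (auto simp: hom_one[OF _ is_group is_group])

lemma it_ne: assumes "f \<in> hom G G" "inj_on f (carrier G)" "x \<in> carrier G" "x \<noteq> \<one>"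
  shows "(f ^^ n) x \<noteq> \<one>"
proof (induction n)
  case 0 then show ?case using assms by simp
next
  case (Suc n)
  have "(f ^^ Suc n) x = f ((f ^^ n) x)" by simp
  moreover have "f ((f ^^ n) x) \<noteq> f \<one>"
    using Suc assms it_closed[OF assms(1,3)] inj_on_eq_iff[OF assms(2)] by auto
  ultimately show ?case using hom_one[OF assms(1) is_group is_group] by simp
qed

lemma growth:
  assumes S: "S \<subseteq> carrier G" "generate G S = carrier G"
    and f: "f \<in> hom G G"
    and ht: "\<And>x. x \<in> carrier G \<Longrightarrow> f x \<otimes> inv x \<in> lower_central G 1"
    and c: "lower_central G c = {\<one>}"
  shows "c - k \<le> m \<Longrightarrow> x \<in> lower_central G k \<Longrightarrow> \<exists>A. \<forall>n. word_length G S ((f ^^ n) x) \<le> A * (n+1)^m"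
proof (induction m arbitrary: k x)
  case 0
  then have "x = \<one>" using lc_antimono[of c k] c by auto
  then show ?case using it_one[OF f] wl_one by simp
next
  case (Suc m)
  show ?case
  proof (cases "c - k \<le> m")
    case True
    then obtain A where A: "\<forall>n. word_length G S ((f ^^ n) x) \<le> A * (n+1)^m" using Suc by blast
    have "A * (n+1)^m \<le> A * (n+1)^Suc m" for n by (simp add: mult_le_mono2)
    then show ?thesis using A le_trans by blast
  next
    case False
    then have km: "c - Suc k \<le> m" using Suc.prems(1) by linarith
    have xc: "x \<in> carrier G" using Suc.prems by simp
    have d: "f x \<otimes> inv x \<in> lower_central G (Suc k)" using D_lemma[OF f ht Suc.prems(2)] .
    obtain A where A: "\<forall>n. word_length G S ((f ^^ n) (f x \<otimes> inv x)) \<le> A * (n+1)^m"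
      using Suc.IH[OF km d] by blast
    have dc: "f x \<otimes> inv x \<in> carrier G" using lc_in[OF d] .
    have step: "word_length G S ((f ^^ Suc n) x) \<le> word_length G S ((f ^^ n) x) + A * (n+1)^m" for n
    proof -
      have "(f ^^ Suc n) x = (f ^^ n) (f x)" by (simp add: funpow_Suc_right del: funpow.simps)
      also have "f x = (f x \<otimes> inv x) \<otimes> x" using xc hom_in_carrier[OF f xc] by (simp add: m_assoc)
      also have "(f ^^ n) ((f x \<otimes> inv x) \<otimes> x) = (f ^^ n) (f x \<otimes> inv x) \<otimes> (f ^^ n) x"
        using it_mult[OF f dc xc] .
      finally have "word_length G S ((f ^^ Suc n) x) \<le>
          word_length G S ((f ^^ n) (f x \<otimes> inv x)) + word_length G S ((f ^^ n) x)"
        using wl_mult[OF S it_closed[OF f dc] it_closed[OF f xc]] by simp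
      moreover have "word_length G S ((f ^^ n) (f x \<otimes> inv x)) \<le> A * (n+1)^m" using A by blast
      ultimately show ?thesis by linarith
    qed
    show ?thesis using tele[where f="\<lambda>n. word_length G S ((f ^^ n) x)", OF step] by blast
  qed
qed

end

lemma root_lim:
  fixes a :: "nat \<Rightarrow> real"
  assumes lo: "\<And>n. 1 \<le> a n" and hi: "\<And>n. a n \<le> A * (real n + 1)^d"
  shows "(\<lambda>n. root n (a n)) \<longlonglongrightarrow> 1"
proof (rule real_tendsto_sandwich[where f="\<lambda>n. 1" and h="\<lambda>n. root n (A * 2^d) * (root n (real n))^d"])
  have A1: "1 \<le> A" using lo[of 0] hi[of 0] by simp
  show "\<forall>\<^sub>F n in sequentially. 1 \<le> root n (a n)"
    using eventually_gt_at_top[of 0]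
  proof eventually_elim
    case (elim n) then show ?case using lo[of n] real_root_ge_1_iff by blast
  qed
  show "\<forall>\<^sub>F n in sequentially. root n (a n) \<le> root n (A * 2^d) * (root n (real n))^d"
    using eventually_gt_at_top[of 0]
  proof eventually_elim
    case (elim n)
    have "real n + 1 \<le> 2 * real n" using elim by simp
    then have "(real n + 1)^d \<le> (2 * real n)^d" by (rule power_mono) simp
    then have "A * (real n + 1)^d \<le> A * (2 * real n)^d" using A1 by (intro mult_left_mono) auto
    then have "a n \<le> A * (2 * real n)^d" using hi[of n] by linarith
    then have "a n \<le> A * 2^d * real n ^ d" by (simp add: power_mult_distrib mult.assoc)
    then have "root n (a n) \<le> root n (A * 2^d * real n ^ d)" using elim by simp
    also have "\<dots> = root n (A * 2^d) * (root n (real n))^d"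
      using elim by (simp add: real_root_mult real_root_power)
    finally show ?case .
  qed
  show "(\<lambda>n. 1::real) \<longlonglongrightarrow> 1" by simp
  have "(\<lambda>n. root n (A * 2^d) * (root n (real n))^d) \<longlonglongrightarrow> 1 * 1^d"
  proof (rule tendsto_mult)
    show "(\<lambda>n. root n (A * 2^d)) \<longlonglongrightarrow> 1" using A1 by (intro LIMSEQ_root_const) simp
    show "(\<lambda>n. (root n (real n))^d) \<longlonglongrightarrow> 1^d" by (rule tendsto_power[OF LIMSEQ_root])
  qed
  then show "(\<lambda>n. root n (A * 2^d) * (root n (real n))^d) \<longlonglongrightarrow> 1" by simp
qed

theorem corollary1p4:
  fixes N :: "('a, 'b) monoid_scheme" and \<phi> :: "'a \<Rightarrow> 'a" and S :: "'a set"
  assumes "group N"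
    and "nilpotent_group N"
    and "torsion_free N"
    and "finite_generating_set N S"
    and "carrier N \<noteq> {\<one>\<^bsub>N\<^esub>}"
    and "\<phi> \<in> iso N N"
    and "homologically_trivial N \<phi>"
  shows "(\<forall>s \<in> S. convergent (entropy_seq N S \<phi> s)) \<and> entropy N S \<phi> = 1"
proof -
  interpret group N by fact
  have f: "\<phi> \<in> hom N N" and inj: "inj_on \<phi> (carrier N)"
    using assms(6) by (auto simp: iso_def bij_betw_imp_inj_on)
  have ht: "\<And>x. x \<in> carrier N \<Longrightarrow> \<phi> x \<otimes>\<^bsub>N\<^esub> inv\<^bsub>N\<^esub> x \<in> lower_central N 1"
    using assms(7) derived_lc1 by (auto simp: homologically_trivial_def)
  obtain c where c: "lower_central N c = {\<one>\<^bsub>N\<^esub>}" using assms(2) by (auto simp: nilpotent_group_def)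
  have S: "finite S" "S \<subseteq> carrier N" "generate N S = carrier N"
    using assms(4) by (auto simp: finite_generating_set_def)
  have lim1: "entropy_seq N S \<phi> s \<longlonglongrightarrow> (if s = \<one>\<^bsub>N\<^esub> then 0 else 1)" if s: "s \<in> S" for s
  proof (cases "s = \<one>\<^bsub>N\<^esub>")
    case True
    have "entropy_seq N S \<phi> s = (\<lambda>n. 0)"
      using True by (auto simp: entropy_seq_def it_one[OF f] wl_one)
    then show ?thesis using True by simp
  next
    case False
    have sc: "s \<in> carrier N" using s S by auto
    obtain A where A: "\<forall>n. word_length N S ((\<phi> ^^ n) s) \<le> A * (n + 1) ^ c"
      using growth[OF S(2,3) f ht c, of 0 c s] sc by auto
    have "(\<lambda>n. root n (real (word_length N S ((\<phi> ^^ n) s)))) \<longlonglongrightarrow> 1"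
    proof (rule root_lim)
      fix n
      show "1 \<le> real (word_length N S ((\<phi> ^^ n) s))"
        using wl_pos[OF S(2,3) it_closed[OF f sc] it_ne[OF f inj sc False]] by simp
      have "real (word_length N S ((\<phi> ^^ n) s)) \<le> real (A * (n+1) ^ c)"
        using A by (simp only: of_nat_le_iff)
      then show "real (word_length N S ((\<phi> ^^ n) s)) \<le> real A * (real n + 1) ^ c" by (simp add: add.commute)
    qed
    moreover have "entropy_seq N S \<phi> s = (\<lambda>n. root n (real (word_length N S ((\<phi> ^^ n) s))))"
      by (rule ext) (simp add: entropy_seq_def)
    ultimately show ?thesis using False by simp
  qed
  have conv: "\<forall>s \<in> S. convergent (entropy_seq N S \<phi> s)"
    using lim1 by (auto simp: convergent_def)
  have limv: "lim (entropy_seq N S \<phi> s) = (if s = \<one>\<^bsub>N\<^esub> then 0 else 1)" if "s \<in> S" for s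
    using limI[OF lim1[OF that]] .
  obtain s0 where s0: "s0 \<in> S" "s0 \<noteq> \<one>\<^bsub>N\<^esub>"
  proof (rule ccontr)
    assume "\<not> thesis"
    then have "S \<subseteq> {\<one>\<^bsub>N\<^esub>}" using that by auto
    then have "carrier N \<subseteq> {\<one>\<^bsub>N\<^esub>}" using generate_subgroup_incl[OF _ triv_subgroup] S(3) by auto
    then show False using assms(5) by auto
  qed
  have "entropy N S \<phi> = 1"
    unfolding entropy_def
  proof (rule Max_eqI)
    show "finite ((\<lambda>s. lim (entropy_seq N S \<phi> s)) ` S)" using S(1) by simp
    show "\<And>y. y \<in> (\<lambda>s. lim (entropy_seq N S \<phi> s)) ` S \<Longrightarrow> y \<le> 1" using limv by auto
    show "1 \<in> (\<lambda>s. lim (entropy_seq N S \<phi> s)) ` S" using limv[OF s0(1)] s0 by (auto intro: image_eqI[of _ _ s0])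
  qed
  then show ?thesis using conv by simp
qed

end
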